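(* Let $\mathfrak S=(S,\xrightarrow{F},\le)$ be a complete functional transition system and $\mathcal A=(F,Q,\delta,q_0)$ an rl-automaton on the alphabet $F$. Then $(\mathfrak S\times\mathcal A,\pi_1)$ is a continuous flattening of $\mathfrak S$.
   Context: Complete functional transition system: $(S,\le)$ is a well partial order which is a continuous dcpo; $F$ is a finite set of partial continuous maps (Scott-open domain, $f(\bigvee D)=\bigvee f(D)$ for directed $D\subseteq\operatorname{dom}f$); $s\to f(s)$. rl-automaton: a deterministic finite automaton $(F,Q,\delta,q_0)$ with finite state set $Q$, initial state $q_0$, partial transition function $\delta:Q\times F\rightharpoonup Q$, all states final, whose language is of the form $\operatorname{Pfx}(w_1^*w_2^*\cdots w_k^* )$ (the prefixes of words of $w_1^*\cdots w_k^*$) for some $w_1,\dots,w_k\in F^*$. Synchronized product $\mathfrak S\times\mathcal A$: states $S\times Q$, order $(s,q)\le'(s',q')$ iff $s\le s'$ and $q=q'$; transitions given by the partial maps $f\bowtie\delta:(s,q)\mapsto(f(s),\delta(q,f))$ (defined iff $s\in\operatorname{dom}f$ and $\delta(q,f)$ is defined), one for each $f\in F$ such that $\delta(q,f)$ is defined for some $q\in Q$. $\pi_1$ maps $(s,q)$ to $s$ and $f\bowtie\delta$ to $f$. A functional transition system is flat if there are finitely many words $w_1,\dots,w_k$ over its set of transition maps such that every fireable sequence of transitions lies in $w_1^*\cdots w_k^*$. A morphism $\varphi$ maps states to states and transition maps to transition maps so that $s\in\operatorname{dom}f_1$, $s'=f_1(s)$ imply $\varphi(s)\in\operatorname{dom}\varphi(f_1)$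 and $\varphi(s')=\varphi(f_1)(\varphi(s))$. A continuous flattening of $\mathfrak S$ is a pair $(\mathfrak S_1,\varphi)$ with $\mathfrak S_1$ a flat complete functional transition system and $\varphi:\mathfrak S_1\to\mathfrak S$ a morphism whose state map is Scott-continuous. *)

theory Defs
  imports Main
begin

record ('s, 'l) fts =
  states :: "'s set"
  le     :: "'s \<Rightarrow> 's \<Rightarrow> bool"
  trans  :: "'l set"
  app    :: "'l \<Rightarrow> 's \<Rightarrow> 's option"

definition partial_order_on :: "'s set \<Rightarrow> ('s \<Rightarrow> 's \<Rightarrow> bool) \<Rightarrow> bool" where
  "partial_order_on S r \<longleftrightarrow>
     (\<forall>x\<in>S. r x x) \<and>
     (\<forall>x\<in>S. \<forall>y\<in>S. r x y \<and> r y x \<longrightarrow> x = y) \<and>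
     (\<forall>x\<in>S. \<forall>y\<in>S. \<forall>z\<in>S. r x y \<and> r y z \<longrightarrow> r x z)"

definition wpo_on :: "'s set \<Rightarrow> ('s \<Rightarrow> 's \<Rightarrow> bool) \<Rightarrow> bool" where
  "wpo_on S r \<longleftrightarrow> partial_order_on S r \<and>
     (\<forall>x :: nat \<Rightarrow> 's. (\<forall>n. x n \<in> S) \<longrightarrow> (\<exists>i j. i < j \<and> r (x i) (x j)))"

definition directed_in :: "'s set \<Rightarrow> ('s \<Rightarrow> 's \<Rightarrow> bool) \<Rightarrow> 's set \<Rightarrow> bool" where
  "directed_in S r D \<longleftrightarrow> D \<subseteq> S \<and> D \<noteq> {} \<and>
     (\<forall>x\<in>D. \<forall>y\<in>D. \<exists>z\<in>D. r x z \<and> r y z)"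

definition is_lub_in :: "'s set \<Rightarrow> ('s \<Rightarrow> 's \<Rightarrow> bool) \<Rightarrow> 's set \<Rightarrow> 's \<Rightarrow> bool" where
  "is_lub_in S r D x \<longleftrightarrow> x \<in> S \<and> (\<forall>y\<in>D. r y x) \<and>
     (\<forall>z\<in>S. (\<forall>y\<in>D. r y z) \<longrightarrow> r x z)"

definition dcpo_on :: "'s set \<Rightarrow> ('s \<Rightarrow> 's \<Rightarrow> bool) \<Rightarrow> bool" where
  "dcpo_on S r \<longleftrightarrow> partial_order_on S r \<and>
     (\<forall>D. directed_in S r D \<longrightarrow> (\<exists>x. is_lub_in S r D x))"

definition way_below :: "'s set \<Rightarrow> ('s \<Rightarrow> 's \<Rightarrow> bool) \<Rightarrow> 's \<Rightarrow> 's \<Rightarrow> bool" where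
  "way_below S r x y \<longleftrightarrow>
     (\<forall>D d. directed_in S r D \<longrightarrow> is_lub_in S r D d \<longrightarrow> r y d \<longrightarrow> (\<exists>z\<in>D. r x z))"

definition continuous_dcpo_on :: "'s set \<Rightarrow> ('s \<Rightarrow> 's \<Rightarrow> bool) \<Rightarrow> bool" where
  "continuous_dcpo_on S r \<longleftrightarrow> dcpo_on S r \<and>
     (\<forall>x\<in>S. directed_in S r {y\<in>S. way_below S r y x} \<and>
             is_lub_in S r {y\<in>S. way_below S r y x} x)"

definition scott_open_in :: "'s set \<Rightarrow> ('s \<Rightarrow> 's \<Rightarrow> bool) \<Rightarrow> 's set \<Rightarrow> bool" where
  "scott_open_in S r U \<longleftrightarrow> U \<subseteq> S \<and>
     (\<forall>x\<in>U. \<forall>y\<in>S. r x y \<longrightarrow> y \<in> U) \<and>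
     (\<forall>D d. directed_in S r D \<longrightarrow> is_lub_in S r D d \<longrightarrow> d \<in> U \<longrightarrow> D \<inter> U \<noteq> {})"

definition pdom :: "('s \<Rightarrow> 's option) \<Rightarrow> 's set" where
  "pdom f = {s. f s \<noteq> None}"

definition partial_continuous_on :: "'s set \<Rightarrow> ('s \<Rightarrow> 's \<Rightarrow> bool) \<Rightarrow> ('s \<Rightarrow> 's option) \<Rightarrow> bool" where
  "partial_continuous_on S r f \<longleftrightarrow>
     scott_open_in S r (pdom f) \<and>
     (\<forall>s\<in>pdom f. the (f s) \<in> S) \<and>
     (\<forall>D d. directed_in S r D \<longrightarrow> D \<subseteq> pdom f \<longrightarrow> is_lub_in S r D d \<longrightarrow>
        is_lub_in S r ((\<lambda>s. the (f s)) ` D) (the (f d)))"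

definition scott_continuous_map ::
  "'s set \<Rightarrow> ('s \<Rightarrow> 's \<Rightarrow> bool) \<Rightarrow> 't set \<Rightarrow> ('t \<Rightarrow> 't \<Rightarrow> bool) \<Rightarrow> ('s \<Rightarrow> 't) \<Rightarrow> bool" where
  "scott_continuous_map S r T r' g \<longleftrightarrow> g ` S \<subseteq> T \<and>
     (\<forall>D d. directed_in S r D \<longrightarrow> is_lub_in S r D d \<longrightarrow> is_lub_in T r' (g ` D) (g d))"

definition complete_fts :: "('s, 'l) fts \<Rightarrow> bool" where
  "complete_fts \<Sigma> \<longleftrightarrow>
     wpo_on (states \<Sigma>) (le \<Sigma>) \<and> continuous_dcpo_on (states \<Sigma>) (le \<Sigma>) \<and>
     finite (trans \<Sigma>) \<and>
     (\<forall>f\<in>trans \<Sigma>. partial_continuous_on (states \<Sigma>) (le \<Sigma>) (app \<Sigma> f))"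

fun run :: "('l \<Rightarrow> 's \<Rightarrow> 's option) \<Rightarrow> 'l list \<Rightarrow> 's \<Rightarrow> 's option" where
  "run a [] s = Some s"
| "run a (f # w) s = (case a f s of None \<Rightarrow> None | Some s' \<Rightarrow> run a w s')"

definition fireable :: "('s, 'l) fts \<Rightarrow> 'l list \<Rightarrow> bool" where
  "fireable \<Sigma> w \<longleftrightarrow> set w \<subseteq> trans \<Sigma> \<and> (\<exists>s\<in>states \<Sigma>. run (app \<Sigma>) w s \<noteq> None)"

text \<open>w \<in> ws!0^* ws!1^* ... ws!(k-1)^*\<close>
definition in_stars :: "'l list list \<Rightarrow> 'l list \<Rightarrow> bool" where
  "in_stars ws w \<longleftrightarrow> (\<exists>ns :: nat list. length ns = length ws \<and>
      w = concat (map (\<lambda>(u, n). concat (replicate n u)) (zip ws ns)))"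

definition flat :: "('s, 'l) fts \<Rightarrow> bool" where
  "flat \<Sigma> \<longleftrightarrow> (\<exists>ws. set (concat ws) \<subseteq> trans \<Sigma> \<and>
      (\<forall>w. fireable \<Sigma> w \<longrightarrow> in_stars ws w))"

definition fts_morphism :: "('s, 'l) fts \<Rightarrow> ('t, 'm) fts \<Rightarrow> ('s \<Rightarrow> 't) \<Rightarrow> ('l \<Rightarrow> 'm) \<Rightarrow> bool" where
  "fts_morphism \<Sigma>1 \<Sigma>2 \<phi>s \<phi>l \<longleftrightarrow>
     \<phi>s ` states \<Sigma>1 \<subseteq> states \<Sigma>2 \<and> \<phi>l ` trans \<Sigma>1 \<subseteq> trans \<Sigma>2 \<and>
     (\<forall>f\<in>trans \<Sigma>1. \<forall>s\<in>states \<Sigma>1. \<forall>s'. app \<Sigma>1 f s = Some s' \<longrightarrow>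
        app \<Sigma>2 (\<phi>l f) (\<phi>s s) = Some (\<phi>s s'))"

definition continuous_flattening ::
  "('t, 'm) fts \<Rightarrow> ('s \<Rightarrow> 't) \<Rightarrow> ('l \<Rightarrow> 'm) \<Rightarrow> ('s, 'l) fts \<Rightarrow> bool" where
  "continuous_flattening \<Sigma> \<phi>s \<phi>l \<Sigma>1 \<longleftrightarrow>
     flat \<Sigma>1 \<and> complete_fts \<Sigma>1 \<and> fts_morphism \<Sigma>1 \<Sigma> \<phi>s \<phi>l \<and>
     scott_continuous_map (states \<Sigma>1) (le \<Sigma>1) (states \<Sigma>) (le \<Sigma>) \<phi>s"

fun drun :: "('q \<Rightarrow> 'l \<Rightarrow> 'q option) \<Rightarrow> 'q \<Rightarrow> 'l list \<Rightarrow> 'q option" where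
  "drun \<delta> q [] = Some q"
| "drun \<delta> q (f # w) = (case \<delta> q f of None \<Rightarrow> None | Some q' \<Rightarrow> drun \<delta> q' w)"

text \<open>Deterministic automaton over alphabet F with states Q, all final; language = Pfx(w1^* ... wk^*).\<close>
definition rl_automaton :: "'l set \<Rightarrow> 'q set \<Rightarrow> ('q \<Rightarrow> 'l \<Rightarrow> 'q option) \<Rightarrow> 'q \<Rightarrow> bool" where
  "rl_automaton F Q \<delta> q0 \<longleftrightarrow>
     finite Q \<and> q0 \<in> Q \<and>
     (\<forall>q f q'. \<delta> q f = Some q' \<longrightarrow> q \<in> Q \<and> f \<in> F \<and> q' \<in> Q) \<and>
     (\<forall>q\<in>Q. \<exists>w. drun \<delta> q0 w = Some q) \<and>
     (\<exists>ws. set (concat ws) \<subseteq> F \<and>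
        (\<forall>w. set w \<subseteq> F \<longrightarrow> (drun \<delta> q0 w \<noteq> None \<longleftrightarrow> (\<exists>v. in_stars ws (w @ v)))))"

definition sync_product :: "('s, 'l) fts \<Rightarrow> 'q set \<Rightarrow> ('q \<Rightarrow> 'l \<Rightarrow> 'q option) \<Rightarrow> ('s \<times> 'q, 'l) fts" where
  "sync_product \<Sigma> Q \<delta> =
     \<lparr> states = states \<Sigma> \<times> Q,
       le = (\<lambda>(s, q) (s', q'). le \<Sigma> s s' \<and> q = q'),
       trans = {f \<in> trans \<Sigma>. \<exists>q\<in>Q. \<delta> q f \<noteq> None},
       app = (\<lambda>f (s, q). case app \<Sigma> f s of None \<Rightarrow> None
                | Some s' \<Rightarrow> (case \<delta> q f of None \<Rightarrow> None | Some q' \<Rightarrow> Some (s', q'))) \<rparr>"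

end

theory Submission
  imports Defs "HOL-Library.Infinite_Set"
begin


lemma in_stars_Nil[simp]: "in_stars [] w \<longleftrightarrow> w = []"
  unfolding in_stars_def by auto

lemma in_stars_Cons: "in_stars (u#ws) w \<longleftrightarrow> (\<exists>n v. w = concat (replicate n u) @ v \<and> in_stars ws v)"
proof
  assume "in_stars (u#ws) w"
  then obtain ns where "length ns = length (u#ws)" "w = concat (map (\<lambda>(u, n). concat (replicate n u)) (zip (u#ws) ns))"
    unfolding in_stars_def by blast
  then show "\<exists>n v. w = concat (replicate n u) @ v \<and> in_stars ws v"
    unfolding in_stars_def by (cases ns) auto
next
  assume "\<exists>n v. w = concat (replicate n u) @ v \<and> in_stars ws v"
  then obtain n v ns where "w = concat (replicate n u) @ v" "length ns = length ws"
     "v = concat (map (\<lambda>(u, n). concat (replicate n u)) (zip ws ns))"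
    unfolding in_stars_def by blast
  then show "in_stars (u#ws) w" unfolding in_stars_def
    by (intro exI[of _ "n#ns"]) auto
qed

lemma in_stars_empty: "in_stars ws []"
  by (induction ws) (auto simp: in_stars_Cons intro: exI[of _ 0])

lemma in_stars_append: "in_stars A x \<Longrightarrow> in_stars B y \<Longrightarrow> in_stars (A@B) (x@y)"
proof (induction A arbitrary: x)
  case Nil then show ?case by simp
next
  case (Cons a A)
  then obtain n v where "x = concat (replicate n a) @ v" "in_stars A v" by (auto simp: in_stars_Cons)
  with Cons show ?case by (auto simp: in_stars_Cons)
qed

lemma in_stars_mem: "x \<in> set L \<Longrightarrow> in_stars L x"
proof (induction L)
  case Nil then show ?case by simp
next
  case (Cons a L)
  show ?case
  proof (cases "x = a")
    case True then show ?thesis unfolding in_stars_Cons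
      by (intro exI[of _ 1] exI[of _ "[]"]) (simp add: in_stars_empty)
  next
    case False then show ?thesis using Cons unfolding in_stars_Cons
      by (intro exI[of _ 0] exI[of _ x]) simp
  qed
qed

lemma in_stars_pow: "in_stars [u] (concat (replicate m u))"
  unfolding in_stars_Cons by (intro exI[of _ m] exI[of _ "[]"]) simp

definition facs :: "'a list \<Rightarrow> 'a list list" where
  "facs u = concat (map (\<lambda>i. map (\<lambda>j. take j (drop i u)) [0..<Suc (length u)]) [0..<Suc (length u)])"

lemma facs_mem: "u = p @ x @ s \<Longrightarrow> x \<in> set (facs u)"
proof -
  assume u: "u = p @ x @ s"
  have "x = take (length x) (drop (length p) u)" using u by simp
  moreover have "length p < Suc (length u)" "length x < Suc (length u)" using u by auto
  ultimately show ?thesis unfolding facs_def by force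
qed

lemma pow_prefix: "z @ b = concat (replicate n u) \<Longrightarrow> \<exists>m y s. z = concat (replicate m u) @ y \<and> u = y @ s"
proof (induction n arbitrary: z b)
  case 0 then show ?case by (intro exI[of _ 0]) auto
next
  case (Suc n)
  then have e: "z @ b = u @ concat (replicate n u)" by simp
  show ?case
  proof (cases "length z \<le> length u")
    case True
    then obtain s where "u = z @ s" using e by (metis append_eq_append_conv_if append_take_drop_id)
    then show ?thesis by (intro exI[of _ 0]) auto
  next
    case False
    then obtain z' where "z = u @ z'" "z' @ b = concat (replicate n u)" using e
      by (auto simp: append_eq_append_conv_if) (metis append_take_drop_id)
    with Suc.IH[of z' b] show ?thesis by (metis append.assoc concat_replicate_trivial replicate_Suc concat.simps(2))
  qed
qed

lemma nil_facs: "[] \<in> set (facs u)"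
  using facs_mem[of u "[]" "[]" u] by simp

lemma app_L1: "a @ w = U @ r \<Longrightarrow> length U \<le> length a \<Longrightarrow> \<exists>a'. a = U @ a' \<and> a' @ w = r"
  by (auto simp: append_eq_append_conv2)

lemma app_L2: "a @ w = U @ r \<Longrightarrow> length a \<le> length U \<Longrightarrow> \<exists>c. U = a @ c \<and> c @ r = w"
  by (auto simp: append_eq_append_conv2)

lemma pow_factor: "a @ z @ b = concat (replicate n u) \<Longrightarrow>
   \<exists>x m y. z = x @ concat (replicate m u) @ y \<and> x \<in> set (facs u) \<and> y \<in> set (facs u)"
proof (induction n arbitrary: a)
  case 0 then show ?case using nil_facs by (intro exI[of _ "[]"] exI[of _ 0]) auto
next
  case (Suc n)
  then have e: "a @ z @ b = u @ concat (replicate n u)" by simp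
  have nil: "[] \<in> set (facs u)" using facs_mem[of u "[]" "[]" u] by simp
  show ?case
  proof (cases "length u \<le> length a")
    case True
    then obtain a' where "a = u @ a'" "a' @ z @ b = concat (replicate n u)" using app_L1[OF e] by blast
    then show ?thesis using Suc.IH by blast
  next
    case False
    then obtain c where c: "u = a @ c" "c @ concat (replicate n u) = z @ b" using app_L2[OF e] by force
    show ?thesis
    proof (cases "length z \<le> length c")
      case True
      then obtain d where "c = z @ d" using c by (metis append_eq_append_conv_if append_take_drop_id)
      then have "z \<in> set (facs u)" using c facs_mem[of u a z d] by simp
      then show ?thesis using nil by (intro exI[of _ z] exI[of _ 0] exI[of _ "[]"]) simp
    next
      case False
      then obtain z2 where z2: "z = c @ z2" "z2 @ b = concat (replicate n u)" using c
        by (auto simp: append_eq_append_conv_if) (metis append_take_drop_id)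
      obtain m y s where "z2 = concat (replicate m u) @ y" "u = y @ s" using pow_prefix[OF z2(2)] by blast
      moreover have "c \<in> set (facs u)" using c facs_mem[of u a c "[]"] by simp
      moreover have "y \<in> set (facs u)" using \<open>u = y @ s\<close> facs_mem[of u "[]" y s] by simp
      ultimately show ?thesis using z2 by blast
    qed
  qed
qed

fun G :: "'a list list \<Rightarrow> 'a list list" where
  "G [] = []"
| "G (u # ws) = facs u @ [u] @ facs u @ G ws"

lemma in_stars_block: "x \<in> set (facs u) \<Longrightarrow> y \<in> set (facs u) \<Longrightarrow>
   in_stars (facs u @ [u] @ facs u) (x @ concat (replicate m u) @ y)"
  by (intro in_stars_append in_stars_mem in_stars_pow)

lemma factor_G: "in_stars ws (a @ z @ b) \<Longrightarrow> in_stars (G ws) z"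
proof (induction ws arbitrary: a z b)
  case Nil then show ?case by simp
next
  case (Cons u ws)
  then obtain n r where e: "a @ z @ b = concat (replicate n u) @ r" and r: "in_stars ws r"
    by (auto simp: in_stars_Cons)
  have nil: "[] \<in> set (facs u)" using facs_mem[of u "[]" "[]" u] by simp
  have blk0: "in_stars (facs u @ [u] @ facs u) []" by (rule in_stars_empty)
  let ?U = "concat (replicate n u)"
  show ?case
  proof (cases "length ?U \<le> length a")
    case True
    then obtain a' where "a' @ z @ b = r" using app_L1[OF e] by blast
    then have "in_stars (G ws) z" using Cons.IH r by blast
    then show ?thesis using in_stars_append[OF blk0] by fastforce
  next
    case False
    then obtain c where c: "?U = a @ c" "c @ r = z @ b" using app_L2[OF e] by force
    show ?thesis
    proof (cases "length z \<le> length c")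
      case True
      then obtain d where "c = z @ d" using c by (metis append_eq_append_conv_if append_take_drop_id)
      then obtain x m y where "z = x @ concat (replicate m u) @ y" "x \<in> set (facs u)" "y \<in> set (facs u)"
        using pow_factor[of a z d n u] c by auto
      then have "in_stars (facs u @ [u] @ facs u) z" using in_stars_block by blast
      then show ?thesis using in_stars_append[OF _ in_stars_empty[of "G ws"]] by fastforce
    next
      case False
      then obtain z2 where z2: "z = c @ z2" "z2 @ b = r" using c
        by (auto simp: append_eq_append_conv_if) (metis append_take_drop_id)
      obtain x m y where "c = x @ concat (replicate m u) @ y" "x \<in> set (facs u)" "y \<in> set (facs u)"
        using pow_factor[of a c "[]" n u] c by auto
      then have "in_stars (facs u @ [u] @ facs u) c" using in_stars_block by blast
      moreover have "in_stars (G ws) z2" using Cons.IH[of "[]" z2 b] z2 r by simp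
      ultimately show ?thesis using in_stars_append z2 by fastforce
    qed
  qed
qed

lemma set_facs: "set (concat (facs u)) \<subseteq> set u"
  unfolding facs_def by (auto dest: in_set_takeD in_set_dropD)

lemma set_G: "set (concat (G ws)) \<subseteq> set (concat ws)"
  apply (induction ws) apply simp using set_facs by fastforce

definition PR :: "('s \<Rightarrow> 's \<Rightarrow> bool) \<Rightarrow> 's \<times> 'q \<Rightarrow> 's \<times> 'q \<Rightarrow> bool" where
  "PR r = (\<lambda>(s, q) (s', q'). r s s' \<and> q = q')"

lemma PR_simp[simp]: "PR r (s, q) (s', q') \<longleftrightarrow> r s s' \<and> q = q'"
  by (simp add: PR_def)

lemma PR_iff: "PR r x y \<longleftrightarrow> r (fst x) (fst y) \<and> snd x = snd y"
  by (simp add: PR_def split: prod.splits)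

lemma po_refl: "partial_order_on S r \<Longrightarrow> x \<in> S \<Longrightarrow> r x x"
  unfolding partial_order_on_def by blast
lemma po_anti: "partial_order_on S r \<Longrightarrow> x \<in> S \<Longrightarrow> y \<in> S \<Longrightarrow> r x y \<Longrightarrow> r y x \<Longrightarrow> x = y"
  unfolding partial_order_on_def by blast
lemma po_trans: "partial_order_on S r \<Longrightarrow> x \<in> S \<Longrightarrow> y \<in> S \<Longrightarrow> z \<in> S \<Longrightarrow> r x y \<Longrightarrow> r y z \<Longrightarrow> r x z"
  unfolding partial_order_on_def by blast

lemma po_PR: "partial_order_on S r \<Longrightarrow> partial_order_on (S \<times> Q) (PR r)"
proof -
  assume po: "partial_order_on S r"
  note refl = po_refl[OF po] and anti = po_anti[OF po] and tr = po_trans[OF po]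
  show ?thesis unfolding partial_order_on_def
  proof (intro conjI ballI impI)
    fix x assume "x \<in> S \<times> Q" then show "PR r x x" using refl by (cases x) simp
  next
    fix x y assume a: "x \<in> S \<times> Q" "y \<in> S \<times> Q" "PR r x y \<and> PR r y x"
    obtain a1 b1 a2 b2 where xy: "x = (a1, b1)" "y = (a2, b2)" by force
    have "(a1, b1) \<in> S \<times> Q" "(a2, b2) \<in> S \<times> Q" "PR r (a1, b1) (a2, b2)" "PR r (a2, b2) (a1, b1)"
      using a unfolding xy by blast+
    then have h: "a1 \<in> S" "a2 \<in> S" "r a1 a2" "r a2 a1" "b1 = b2" by simp_all
    then show "x = y" using xy anti[OF h(1-4)] by simp
  next
    fix x y z assume a: "x \<in> S \<times> Q" "y \<in> S \<times> Q" "z \<in> S \<times> Q" "PR r x y \<and> PR r y z"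
    obtain a1 b1 a2 b2 a3 b3 where xy: "x = (a1, b1)" "y = (a2, b2)" "z = (a3, b3)" by (cases x, cases y, cases z) force
    then show "PR r x z" using a tr[of a1 a2 a3] by simp
  qed
qed

lemma dir_PR: "directed_in (S \<times> Q) (PR r) D \<Longrightarrow>
   \<exists>q\<in>Q. D = fst ` D \<times> {q} \<and> directed_in S r (fst ` D)"
proof -
  assume d: "directed_in (S \<times> Q) (PR r) D"
  have dsub: "D \<subseteq> S \<times> Q" and dne: "D \<noteq> {}"
    and dd: "\<And>x y. x \<in> D \<Longrightarrow> y \<in> D \<Longrightarrow> \<exists>z\<in>D. PR r x z \<and> PR r y z"
    using d unfolding directed_in_def by blast+
  then obtain p where p: "p \<in> D" by blast
  have same: "snd x = snd p" if xD: "x \<in> D" for x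
  proof -
    obtain z where "z \<in> D" "PR r x z" "PR r p z" using dd[OF xD p] by blast
    then show ?thesis unfolding PR_iff by simp
  qed
  have "D = fst ` D \<times> {snd p}"
  proof
    show "D \<subseteq> fst ` D \<times> {snd p}"
    proof
      fix x assume "x \<in> D" then show "x \<in> fst ` D \<times> {snd p}" using same[of x] by (metis SigmaI image_eqI prod.collapse singletonI)
    qed
    show "fst ` D \<times> {snd p} \<subseteq> D"
    proof
      fix x assume "x \<in> fst ` D \<times> {snd p}"
      then obtain y where "y \<in> D" "x = (fst y, snd p)" by auto
      with same[of y] show "x \<in> D" by (metis prod.collapse)
    qed
  qed
  moreover have "snd p \<in> Q" using subsetD[OF dsub p] by (simp add: mem_Times_iff)
  moreover have "directed_in S r (fst ` D)"
    unfolding directed_in_def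
  proof (intro conjI ballI)
    show "fst ` D \<subseteq> S" using dsub by force
    show "fst ` D \<noteq> {}" using p by auto
    fix x y assume "x \<in> fst ` D" "y \<in> fst ` D"
    then obtain x' y' where "x' \<in> D" "y' \<in> D" "x = fst x'" "y = fst y'" by auto
    then obtain z where "z \<in> D" "PR r x' z" "PR r y' z" using dd by blast
    then show "\<exists>z\<in>fst ` D. r x z \<and> r y z" using \<open>x = fst x'\<close> \<open>y = fst y'\<close>
      unfolding PR_iff by (metis image_eqI)
  qed
  ultimately show ?thesis by (intro bexI[of _ "snd p"] conjI)
qed

lemma dir_PR2: "directed_in S r D \<Longrightarrow> q \<in> Q \<Longrightarrow> directed_in (S \<times> Q) (PR r) (D \<times> {q})"
  unfolding directed_in_def by auto

lemma lub_PR1: "D \<noteq> {} \<Longrightarrow> is_lub_in (S \<times> Q) (PR r) (D \<times> {q}) p \<Longrightarrow>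
   snd p = q \<and> is_lub_in S r D (fst p)"
proof -
  assume ne: "D \<noteq> {}" and l: "is_lub_in (S \<times> Q) (PR r) (D \<times> {q}) p"
  obtain a b where pab: "p = (a, b)" by force
  have bq: "b = q" using ne l pab unfolding is_lub_in_def by auto
  have qQ: "q \<in> Q" using l pab bq unfolding is_lub_in_def by auto
  have aS: "a \<in> S" using l pab unfolding is_lub_in_def by auto
  have ub: "\<forall>y\<in>D. r y a" using l pab bq unfolding is_lub_in_def by auto
  have least: "\<forall>z\<in>S. (\<forall>y\<in>D. r y z) \<longrightarrow> r a z"
  proof (intro ballI impI)
    fix z assume zS: "z \<in> S" and zu: "\<forall>y\<in>D. r y z"
    have lp: "\<And>w. w \<in> S \<times> Q \<Longrightarrow> (\<forall>y\<in>D \<times> {q}. PR r y w) \<Longrightarrow> PR r p w"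
      using l unfolding is_lub_in_def by blast
    have "\<forall>y\<in>D \<times> {q}. PR r y (z, q)" using zu by auto
    moreover have "(z, q) \<in> S \<times> Q" using zS qQ by simp
    ultimately have "PR r p (z, q)" using lp by blast
    then have "PR r (a, b) (z, q)" using pab by simp
    then show "r a z" by simp
  qed
  show ?thesis using aS ub least pab bq unfolding is_lub_in_def by simp
qed

lemma lub_PR2: "q \<in> Q \<Longrightarrow> is_lub_in S r D d \<Longrightarrow> D \<noteq> {} \<Longrightarrow>
   is_lub_in (S \<times> Q) (PR r) (D \<times> {q}) (d, q)"
  unfolding is_lub_in_def by auto

lemma dir_single: "partial_order_on S r \<Longrightarrow> x \<in> S \<Longrightarrow> directed_in S r {x}"
  unfolding directed_in_def using po_refl by fastforce

lemma lub_single: "partial_order_on S r \<Longrightarrow> x \<in> S \<Longrightarrow> is_lub_in S r {x} x"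
  unfolding is_lub_in_def using po_refl by fastforce

lemma wb_PR:
  assumes po: "partial_order_on S r" and xS: "x \<in> S" and qQ: "q \<in> Q"
  shows "way_below (S \<times> Q) (PR r) (y, q') (x, q) \<longleftrightarrow> q' = q \<and> way_below S r y x"
proof
  assume wb: "way_below (S \<times> Q) (PR r) (y, q') (x, q)"
  have wb': "\<And>D d. directed_in (S \<times> Q) (PR r) D \<Longrightarrow> is_lub_in (S \<times> Q) (PR r) D d \<Longrightarrow>
      PR r (x, q) d \<Longrightarrow> \<exists>z\<in>D. PR r (y, q') z"
    using wb unfolding way_below_def by blast
  have "\<exists>z\<in>{x} \<times> {q}. PR r (y, q') z"
    using wb'[OF dir_PR2[OF dir_single[OF po xS] qQ] lub_PR2[OF qQ lub_single[OF po xS]]] po_refl[OF po xS]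
    by simp
  then have qq: "q' = q" by simp
  have "way_below S r y x" unfolding way_below_def
  proof (intro allI impI)
    fix D d assume dD: "directed_in S r D" and ld: "is_lub_in S r D d" and xd: "r x d"
    have ne: "D \<noteq> {}" using dD unfolding directed_in_def by blast
    have "\<exists>z\<in>D \<times> {q}. PR r (y, q') z"
      using wb'[OF dir_PR2[OF dD qQ] lub_PR2[OF qQ ld ne]] xd by simp
    then show "\<exists>z\<in>D. r y z" by (auto simp: PR_iff)
  qed
  then show "q' = q \<and> way_below S r y x" using qq by simp
next
  assume "q' = q \<and> way_below S r y x"
  then have qq: "q' = q" and wb: "\<And>D d. directed_in S r D \<Longrightarrow> is_lub_in S r D d \<Longrightarrow> r x d \<Longrightarrow> \<exists>z\<in>D. r y z"
    unfolding way_below_def by blast+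
  show "way_below (S \<times> Q) (PR r) (y, q') (x, q)" unfolding way_below_def
  proof (intro allI impI)
    fix D d assume dD: "directed_in (S \<times> Q) (PR r) D" and ld: "is_lub_in (S \<times> Q) (PR r) D d"
      and xd: "PR r (x, q) d"
    obtain q1 where q1: "q1 \<in> Q" "D = fst ` D \<times> {q1}" "directed_in S r (fst ` D)"
      using dir_PR[OF dD] by blast
    have ne: "fst ` D \<noteq> {}" using q1(3) unfolding directed_in_def by blast
    have l1: "snd d = q1 \<and> is_lub_in S r (fst ` D) (fst d)"
      using lub_PR1[OF ne] ld q1(2) by metis
    have "r x (fst d)" "q = snd d" using xd unfolding PR_iff by simp_all
    then obtain z where z: "z \<in> fst ` D" "r y z" using wb[OF q1(3)] l1 by blast
    have "(z, q1) \<in> D" using z(1) q1(2) by (metis SigmaI singletonI)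
    moreover have "PR r (y, q') (z, q1)" using z(2) qq l1 \<open>q = snd d\<close> by simp
    ultimately show "\<exists>z\<in>D. PR r (y, q') z" by blast
  qed
qed

lemma cdcpo_PR:
  assumes c: "continuous_dcpo_on S r"
  shows "continuous_dcpo_on (S \<times> Q) (PR r)"
proof -
  have dc: "dcpo_on S r" using c unfolding continuous_dcpo_on_def by blast
  have po: "partial_order_on S r" using dc unfolding dcpo_on_def by blast
  have ex: "\<And>D. directed_in S r D \<Longrightarrow> \<exists>x. is_lub_in S r D x" using dc unfolding dcpo_on_def by blast
  have cc: "\<And>x. x \<in> S \<Longrightarrow> directed_in S r {y\<in>S. way_below S r y x} \<and> is_lub_in S r {y\<in>S. way_below S r y x} x"
    using c unfolding continuous_dcpo_on_def by blast
  have "dcpo_on (S \<times> Q) (PR r)" unfolding dcpo_on_def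
  proof (intro conjI allI impI)
    show "partial_order_on (S \<times> Q) (PR r)" by (rule po_PR[OF po])
    fix D assume dD: "directed_in (S \<times> Q) (PR r) D"
    obtain q1 where q1: "q1 \<in> Q" "D = fst ` D \<times> {q1}" "directed_in S r (fst ` D)"
      using dir_PR[OF dD] by blast
    have ne: "fst ` D \<noteq> {}" using q1(3) unfolding directed_in_def by blast
    obtain d where "is_lub_in S r (fst ` D) d" using ex[OF q1(3)] by blast
    then have "is_lub_in (S \<times> Q) (PR r) (fst ` D \<times> {q1}) (d, q1)" using lub_PR2[OF q1(1) _ ne] by blast
    then show "\<exists>x. is_lub_in (S \<times> Q) (PR r) D x" using q1(2) by metis
  qed
  moreover have "directed_in (S \<times> Q) (PR r) {y \<in> S \<times> Q. way_below (S \<times> Q) (PR r) y p} \<and>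
      is_lub_in (S \<times> Q) (PR r) {y \<in> S \<times> Q. way_below (S \<times> Q) (PR r) y p} p" if pP: "p \<in> S \<times> Q" for p
  proof -
    obtain x q where p: "p = (x, q)" by force
    have xS: "x \<in> S" and qQ: "q \<in> Q" using pP p by auto
    have eq: "{y \<in> S \<times> Q. way_below (S \<times> Q) (PR r) y p} = {y\<in>S. way_below S r y x} \<times> {q}"
    proof (rule set_eqI)
      fix w
      show "w \<in> {y \<in> S \<times> Q. way_below (S \<times> Q) (PR r) y p} \<longleftrightarrow> w \<in> {y\<in>S. way_below S r y x} \<times> {q}"
      proof (cases w)
        case (Pair y q')
        show ?thesis unfolding Pair p using wb_PR[OF po xS qQ, of y q'] qQ by auto
      qed
    qed
    have d1: "directed_in S r {y\<in>S. way_below S r y x}" and l1: "is_lub_in S r {y\<in>S. way_below S r y x} x"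
      using cc[OF xS] by blast+
    have ne: "{y\<in>S. way_below S r y x} \<noteq> {}" using d1 unfolding directed_in_def by blast
    have "directed_in (S \<times> Q) (PR r) ({y\<in>S. way_below S r y x} \<times> {q}) \<and>
       is_lub_in (S \<times> Q) (PR r) ({y\<in>S. way_below S r y x} \<times> {q}) (x, q)"
      using dir_PR2[OF d1 qQ] lub_PR2[OF qQ l1 ne] by blast
    then show ?thesis using eq p by simp
  qed
  ultimately show ?thesis unfolding continuous_dcpo_on_def by blast
qed

lemma wpo_PR:
  assumes w: "wpo_on S r" and fQ: "finite Q"
  shows "wpo_on (S \<times> Q) (PR r)"
  unfolding wpo_on_def
proof (intro conjI allI impI)
  have po: "partial_order_on S r" using w unfolding wpo_on_def by blast
  show "partial_order_on (S \<times> Q) (PR r)" by (rule po_PR[OF po])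
  have good: "\<And>y :: nat \<Rightarrow> _. (\<forall>n. y n \<in> S) \<Longrightarrow> \<exists>i j. i < j \<and> r (y i) (y j)"
    using w unfolding wpo_on_def by blast
  fix x :: "nat \<Rightarrow> _" assume xs: "\<forall>n. x n \<in> S \<times> Q"
  have "finite ((snd \<circ> x) ` UNIV)" using xs fQ by (auto intro: finite_subset[of _ Q] simp: mem_Times_iff)
  then obtain q where "infinite ((snd \<circ> x) -` {q})" using inf_img_fin_domE[of "snd \<circ> x" UNIV] by blast
  then have inf: "infinite {n. snd (x n) = q}" by (simp add: vimage_def)
  define N where "N = {n. snd (x n) = q}"
  have infN: "infinite N" using inf N_def by simp
  have "\<forall>n. fst (x (enumerate N n)) \<in> S" using xs by (simp add: mem_Times_iff)
  then obtain i j where ij: "i < j" "r (fst (x (enumerate N i))) (fst (x (enumerate N j)))" using good[of "\<lambda>n. fst (x (enumerate N n))"] by blast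
  have "enumerate N i < enumerate N j" using enumerate_mono[OF ij(1) infN] .
  moreover have "snd (x (enumerate N i)) = q" "snd (x (enumerate N j)) = q"
    using enumerate_in_set[OF infN] N_def by auto
  ultimately show "\<exists>i j. i < j \<and> PR r (x i) (x j)" using ij(2) unfolding PR_iff by metis
qed

definition hprod :: "('s \<Rightarrow> 's option) \<Rightarrow> ('q \<Rightarrow> 'q option) \<Rightarrow> 's \<times> 'q \<Rightarrow> ('s \<times> 'q) option" where
  "hprod g dq = (\<lambda>(s, q). case g s of None \<Rightarrow> None
                | Some s' \<Rightarrow> (case dq q of None \<Rightarrow> None | Some q' \<Rightarrow> Some (s', q')))"

lemma hprod_Some: "hprod g dq (s, q) = Some p \<longleftrightarrow> (\<exists>s' q'. g s = Some s' \<and> dq q = Some q' \<and> p = (s', q'))"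
  by (auto simp: hprod_def split: option.splits)

lemma pdom_hprod: "(s, q) \<in> pdom (hprod g dq) \<longleftrightarrow> s \<in> pdom g \<and> q \<in> pdom dq"
  by (auto simp: pdom_def hprod_def split: option.splits)

lemma the_hprod: "s \<in> pdom g \<Longrightarrow> q \<in> pdom dq \<Longrightarrow> the (hprod g dq (s, q)) = (the (g s), the (dq q))"
  by (auto simp: pdom_def hprod_def split: option.splits)

lemma pc_PR:
  assumes pc: "partial_continuous_on S r g"
    and hd: "\<And>q q'. dq q = Some q' \<Longrightarrow> q \<in> Q \<and> q' \<in> Q"
  shows "partial_continuous_on (S \<times> Q) (PR r) (hprod g dq)"
proof -
  have so: "scott_open_in S r (pdom g)" and img: "\<And>s. s \<in> pdom g \<Longrightarrow> the (g s) \<in> S"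
    and lub: "\<And>D d. directed_in S r D \<Longrightarrow> D \<subseteq> pdom g \<Longrightarrow> is_lub_in S r D d \<Longrightarrow>
        is_lub_in S r ((\<lambda>s. the (g s)) ` D) (the (g d))"
    using pc unfolding partial_continuous_on_def by blast+
  have sub: "pdom g \<subseteq> S" and up: "\<And>x y. x \<in> pdom g \<Longrightarrow> y \<in> S \<Longrightarrow> r x y \<Longrightarrow> y \<in> pdom g"
    and dirx: "\<And>D d. directed_in S r D \<Longrightarrow> is_lub_in S r D d \<Longrightarrow> d \<in> pdom g \<Longrightarrow> D \<inter> pdom g \<noteq> {}"
    using so unfolding scott_open_in_def by blast+
  have dqQ: "\<And>q. q \<in> pdom dq \<Longrightarrow> q \<in> Q" and dqQ': "\<And>q. q \<in> pdom dq \<Longrightarrow> the (dq q) \<in> Q"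
    using hd unfolding pdom_def by fastforce+
  have "scott_open_in (S \<times> Q) (PR r) (pdom (hprod g dq))" unfolding scott_open_in_def
  proof (intro conjI ballI impI allI)
    show "pdom (hprod g dq) \<subseteq> S \<times> Q"
    proof
      fix p assume "p \<in> pdom (hprod g dq)"
      then show "p \<in> S \<times> Q" using sub dqQ by (cases p) (auto simp: pdom_hprod)
    qed
  next
    fix x y assume x: "x \<in> pdom (hprod g dq)" and y: "y \<in> S \<times> Q" and xy: "PR r x y"
    obtain a b where ab: "x = (a, b)" by force
    obtain c e where ce: "y = (c, e)" by force
    have "a \<in> pdom g" "b \<in> pdom dq" using x ab pdom_hprod by metis+
    moreover have "r a c" "b = e" "c \<in> S" using xy y ab ce by simp_all
    ultimately have "c \<in> pdom g" "e \<in> pdom dq" using up by blast+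
    then show "y \<in> pdom (hprod g dq)" using ce pdom_hprod by metis
  next
    fix D d assume dD: "directed_in (S \<times> Q) (PR r) D" and ld: "is_lub_in (S \<times> Q) (PR r) D d"
      and dd: "d \<in> pdom (hprod g dq)"
    obtain q1 where q1: "q1 \<in> Q" "D = fst ` D \<times> {q1}" "directed_in S r (fst ` D)"
      using dir_PR[OF dD] by blast
    have ne: "fst ` D \<noteq> {}" using q1(3) unfolding directed_in_def by blast
    have l1: "snd d = q1 \<and> is_lub_in S r (fst ` D) (fst d)"
      using lub_PR1[OF ne] ld q1(2) by metis
    have "fst d \<in> pdom g" "snd d \<in> pdom dq" using dd pdom_hprod[of "fst d" "snd d" g dq] by simp_all
    then obtain s where s: "s \<in> fst ` D" "s \<in> pdom g" using dirx[OF q1(3)] l1 by blast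
    have "(s, q1) \<in> D" using s(1) q1(2) by (metis SigmaI singletonI)
    moreover have "(s, q1) \<in> pdom (hprod g dq)" using s(2) l1 \<open>snd d \<in> pdom dq\<close> pdom_hprod by metis
    ultimately show "D \<inter> pdom (hprod g dq) \<noteq> {}" by blast
  qed
  moreover have "\<forall>p\<in>pdom (hprod g dq). the (hprod g dq p) \<in> S \<times> Q"
  proof
    fix p assume p: "p \<in> pdom (hprod g dq)"
    obtain a b where ab: "p = (a, b)" by force
    have "a \<in> pdom g" "b \<in> pdom dq" using p ab pdom_hprod by metis+
    then show "the (hprod g dq p) \<in> S \<times> Q" using ab the_hprod[of a g b dq] img dqQ' by simp
  qed
  moreover have "is_lub_in (S \<times> Q) (PR r) ((\<lambda>s. the (hprod g dq s)) ` D) (the (hprod g dq d))"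
    if dD: "directed_in (S \<times> Q) (PR r) D" and Dsub: "D \<subseteq> pdom (hprod g dq)"
      and ld: "is_lub_in (S \<times> Q) (PR r) D d" for D d
  proof -
    obtain q1 where q1: "q1 \<in> Q" "D = fst ` D \<times> {q1}" "directed_in S r (fst ` D)"
      using dir_PR[OF dD] by blast
    have ne: "fst ` D \<noteq> {}" using q1(3) unfolding directed_in_def by blast
    have l1: "snd d = q1 \<and> is_lub_in S r (fst ` D) (fst d)"
      using lub_PR1[OF ne] ld q1(2) by metis
    obtain s0 where s0: "s0 \<in> fst ` D" using ne by blast
    then have "(s0, q1) \<in> D" using q1(2) by (metis SigmaI singletonI)
    then have "(s0, q1) \<in> pdom (hprod g dq)" using Dsub by blast
    then have q1d: "q1 \<in> pdom dq" by (simp add: pdom_hprod)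
    have D1sub: "fst ` D \<subseteq> pdom g"
    proof
      fix s assume "s \<in> fst ` D"
      then have "(s, q1) \<in> D" using q1(2) by (metis SigmaI singletonI)
      then have "(s, q1) \<in> pdom (hprod g dq)" using Dsub by blast
      then show "s \<in> pdom g" by (simp add: pdom_hprod)
    qed
    have L: "is_lub_in S r ((\<lambda>s. the (g s)) ` fst ` D) (the (g (fst d)))"
      using lub[OF q1(3) D1sub] l1 by blast
    have ne2: "(\<lambda>s. the (g s)) ` fst ` D \<noteq> {}" using ne by blast
    have L2: "is_lub_in (S \<times> Q) (PR r) (((\<lambda>s. the (g s)) ` fst ` D) \<times> {the (dq q1)}) (the (g (fst d)), the (dq q1))"
      using lub_PR2[OF dqQ'[OF q1d] L ne2] .
    have eqI: "(\<lambda>s. the (hprod g dq s)) ` D = ((\<lambda>s. the (g s)) ` fst ` D) \<times> {the (dq q1)}"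
    proof (rule set_eqI)
      fix w
      show "w \<in> (\<lambda>s. the (hprod g dq s)) ` D \<longleftrightarrow> w \<in> ((\<lambda>s. the (g s)) ` fst ` D) \<times> {the (dq q1)}"
      proof
        assume "w \<in> (\<lambda>s. the (hprod g dq s)) ` D"
        then obtain p where p: "p \<in> D" "w = the (hprod g dq p)" by blast
        have pe: "p = (fst p, q1)" using p(1) q1(2) by (metis mem_Times_iff prod.collapse singletonD)
        have "fst p \<in> pdom g" using p(1) D1sub by blast
        then have "w = (the (g (fst p)), the (dq q1))" using p(2) pe the_hprod[OF _ q1d] by metis
        then show "w \<in> ((\<lambda>s. the (g s)) ` fst ` D) \<times> {the (dq q1)}" using p(1) by blast
      next
        assume "w \<in> ((\<lambda>s. the (g s)) ` fst ` D) \<times> {the (dq q1)}"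
        then obtain s where s: "s \<in> fst ` D" "w = (the (g s), the (dq q1))" by blast
        have "(s, q1) \<in> D" using s(1) q1(2) by (metis SigmaI singletonI)
        moreover have "s \<in> pdom g" using s(1) D1sub by blast
        then have "the (hprod g dq (s, q1)) = w" using s(2) the_hprod[OF _ q1d] by simp
        ultimately show "w \<in> (\<lambda>s. the (hprod g dq s)) ` D" by (metis image_eqI)
      qed
    qed
    have "d = (fst d, q1)" using l1 by (metis prod.collapse)
    moreover have "fst d \<in> pdom g"
      using l1 D1sub up ne unfolding is_lub_in_def by blast
    ultimately have "the (hprod g dq d) = (the (g (fst d)), the (dq q1))" using the_hprod[OF _ q1d] by metis
    then show ?thesis using L2 eqI by simp
  qed
  ultimately show ?thesis unfolding partial_continuous_on_def by blast
qed

lemma in_stars_filter: "in_stars ws w \<Longrightarrow> set w \<subseteq> A \<Longrightarrow> in_stars (filter (\<lambda>u. set u \<subseteq> A) ws) w"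
proof (induction ws arbitrary: w)
  case Nil then show ?case by simp
next
  case (Cons u ws)
  then obtain n v where nv: "w = concat (replicate n u) @ v" "in_stars ws v" by (auto simp: in_stars_Cons)
  have vA: "set v \<subseteq> A" using Cons.prems(2) nv(1) by simp
  show ?case
  proof (cases "set u \<subseteq> A")
    case True
    then show ?thesis using Cons.IH[OF nv(2) vA] nv(1) by (auto simp: in_stars_Cons)
  next
    case False
    then have "n = 0" using Cons.prems(2) nv(1) by (cases n) auto
    then show ?thesis using Cons.IH[OF nv(2) vA] nv(1) False by simp
  qed
qed

lemma drun_append: "drun \<delta> q (u @ w) = (case drun \<delta> q u of None \<Rightarrow> None | Some q' \<Rightarrow> drun \<delta> q' w)"
  by (induction u arbitrary: q) (auto split: option.splits)

lemma drun_letters: "(\<And>q f q'. \<delta> q f = Some q' \<Longrightarrow> f \<in> F) \<Longrightarrow> drun \<delta> q u = Some q' \<Longrightarrow> set u \<subseteq> F"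
  by (induction u arbitrary: q) (auto split: option.splits)

lemma run_hprod: "run (\<lambda>f. hprod (a f) (\<lambda>q. \<delta> q f)) w (s, q) \<noteq> None \<Longrightarrow> drun \<delta> q w \<noteq> None"
proof (induction w arbitrary: s q)
  case Nil then show ?case by simp
next
  case (Cons f w)
  then obtain p where p: "hprod (a f) (\<lambda>q. \<delta> q f) (s, q) = Some p"
    by (cases "hprod (a f) (\<lambda>q. \<delta> q f) (s, q)") auto
  then obtain s' q' where sq: "a f s = Some s'" "\<delta> q f = Some q'" "p = (s', q')" using hprod_Some by metis
  have "run (\<lambda>f. hprod (a f) (\<lambda>q. \<delta> q f)) w (s', q') \<noteq> None" using Cons.prems p sq(3) by simp
  then show ?case using Cons.IH sq(2) by simp
qed

lemma sync_eq:
  "states (sync_product \<Sigma> Q \<delta>) = states \<Sigma> \<times> Q"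
  "le (sync_product \<Sigma> Q \<delta>) = PR (le \<Sigma>)"
  "trans (sync_product \<Sigma> Q \<delta>) = {f \<in> trans \<Sigma>. \<exists>q\<in>Q. \<delta> q f \<noteq> None}"
  "app (sync_product \<Sigma> Q \<delta>) = (\<lambda>f. hprod (app \<Sigma> f) (\<lambda>q. \<delta> q f))"
  unfolding sync_product_def PR_def hprod_def by simp_all

theorem lemma5p14:
  fixes \<Sigma> :: "('s, 'l) fts" and Q :: "'q set" and \<delta> :: "'q \<Rightarrow> 'l \<Rightarrow> 'q option" and q0 :: 'q
  assumes "complete_fts \<Sigma>"
    and "rl_automaton (trans \<Sigma>) Q \<delta> q0"
  shows "continuous_flattening \<Sigma> fst id (sync_product \<Sigma> Q \<delta>)"
proof -
  let ?P = "sync_product \<Sigma> Q \<delta>"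
  let ?S = "states \<Sigma>" and ?r = "le \<Sigma>" and ?F = "trans \<Sigma>"
  have wpo: "wpo_on ?S ?r" and cd: "continuous_dcpo_on ?S ?r" and fF: "finite ?F"
    and pcs: "\<And>f. f \<in> ?F \<Longrightarrow> partial_continuous_on ?S ?r (app \<Sigma> f)"
    using assms(1) unfolding complete_fts_def by blast+
  have fQ: "finite Q" and dl: "\<And>q f q'. \<delta> q f = Some q' \<Longrightarrow> q \<in> Q \<and> f \<in> ?F \<and> q' \<in> Q"
    and reach: "\<And>q. q \<in> Q \<Longrightarrow> \<exists>w. drun \<delta> q0 w = Some q"
    using assms(2) unfolding rl_automaton_def by blast+
  obtain ws where wsF: "set (concat ws) \<subseteq> ?F"
    and lang: "\<And>w. set w \<subseteq> ?F \<Longrightarrow> drun \<delta> q0 w \<noteq> None \<Longrightarrow> \<exists>v. in_stars ws (w @ v)"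
    using assms(2) unfolding rl_automaton_def by blast
  have po: "partial_order_on ?S ?r" using wpo unfolding wpo_on_def by blast
  have complete: "complete_fts ?P" unfolding complete_fts_def sync_eq
  proof (intro conjI ballI)
    show "wpo_on (?S \<times> Q) (PR ?r)" by (rule wpo_PR[OF wpo fQ])
    show "continuous_dcpo_on (?S \<times> Q) (PR ?r)" by (rule cdcpo_PR[OF cd])
    show "finite {f \<in> ?F. \<exists>q\<in>Q. \<delta> q f \<noteq> None}" using fF by simp
    fix f assume "f \<in> {f \<in> ?F. \<exists>q\<in>Q. \<delta> q f \<noteq> None}"
    then have "f \<in> ?F" by simp
    then show "partial_continuous_on (?S \<times> Q) (PR ?r) (hprod (app \<Sigma> f) (\<lambda>q. \<delta> q f))"
      using pc_PR[OF pcs, of f "\<lambda>q. \<delta> q f" Q] dl by blast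
  qed
  let ?T = "{f \<in> ?F. \<exists>q\<in>Q. \<delta> q f \<noteq> None}"
  have flat: "flat ?P" unfolding flat_def
  proof (intro exI[of _ "filter (\<lambda>u. set u \<subseteq> ?T) (G ws)"] conjI allI impI)
    show "set (concat (filter (\<lambda>u. set u \<subseteq> ?T) (G ws))) \<subseteq> trans ?P"
      unfolding sync_eq by auto
    fix w assume fw: "fireable ?P w"
    then have wT: "set w \<subseteq> ?T" unfolding fireable_def sync_eq by blast
    obtain p where pP: "p \<in> ?S \<times> Q" and rp: "run (\<lambda>f. hprod (app \<Sigma> f) (\<lambda>q. \<delta> q f)) w p \<noteq> None"
      using fw unfolding fireable_def sync_eq by blast
    obtain s q where p: "p = (s, q)" by force
    have qQ: "q \<in> Q" using pP p by simp
    have dq: "drun \<delta> q w \<noteq> None" using run_hprod[of "app \<Sigma>" \<delta> w s q] rp p by simp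
    obtain u where u: "drun \<delta> q0 u = Some q" using reach[OF qQ] by blast
    have uF: "set u \<subseteq> ?F" using drun_letters[of \<delta> ?F q0 u q] dl u by blast
    have "drun \<delta> q0 (u @ w) \<noteq> None" using u dq by (simp add: drun_append)
    moreover have "set (u @ w) \<subseteq> ?F" using uF wT by auto
    ultimately have "\<exists>v. in_stars ws ((u @ w) @ v)" using lang by blast
    then obtain v where "in_stars ws (u @ w @ v)" by auto
    then have "in_stars (G ws) w" by (rule factor_G)
    then show "in_stars (filter (\<lambda>u. set u \<subseteq> ?T) (G ws)) w" using in_stars_filter wT by blast
  qed
  have morph: "fts_morphism ?P \<Sigma> fst id" unfolding fts_morphism_def sync_eq
  proof (intro conjI ballI allI impI)
    show "fst ` (?S \<times> Q) \<subseteq> ?S" by auto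
    show "id ` ?T \<subseteq> ?F" by auto
    fix f p p' assume "f \<in> ?T" "p \<in> ?S \<times> Q" and h: "hprod (app \<Sigma> f) (\<lambda>q. \<delta> q f) p = Some p'"
    obtain s q where p: "p = (s, q)" by force
    obtain s' q' where "app \<Sigma> f s = Some s'" "p' = (s', q')" using h p hprod_Some by metis
    then show "app \<Sigma> (id f) (fst p) = Some (fst p')" using p by simp
  qed
  have sc: "scott_continuous_map (states ?P) (le ?P) ?S ?r fst" unfolding scott_continuous_map_def sync_eq
  proof (intro conjI allI impI)
    show "fst ` (?S \<times> Q) \<subseteq> ?S" by auto
    fix D d assume dD: "directed_in (?S \<times> Q) (PR ?r) D" and ld: "is_lub_in (?S \<times> Q) (PR ?r) D d"
    obtain q1 where q1: "q1 \<in> Q" "D = fst ` D \<times> {q1}" "directed_in ?S ?r (fst ` D)"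
      using dir_PR[OF dD] by blast
    have ne: "fst ` D \<noteq> {}" using q1(3) unfolding directed_in_def by blast
    show "is_lub_in ?S ?r (fst ` D) (fst d)" using lub_PR1[OF ne] ld q1(2) by metis
  qed
  show ?thesis unfolding continuous_flattening_def using flat complete morph sc by blast
qed

end
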